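(* Let $a,b,c,e\in\mathbb Z$ with $a\neq0$, $e>0$, such that $h_3(j)=aj^3+bj^2+cj+e$ satisfies $h_3(j)\ge0$ for all integers $j\ge0$ (so $h_3\in\mathcal H_0$). Let $\alpha=a/e$, $\beta=b/e$, $\gamma=c/e$ and $$f(x)=\tfrac12x^2-\left(\alpha+\beta+\gamma+\tfrac32\right)x+(9\alpha+5\beta+3\gamma+2).$$ Assume $\alpha+\beta+\gamma\ge 2$. If there exists an integer $d$ with $3\le d\le c(h_3)+1$ and $f(d)<0$, then $\operatorname{hdepth}(h_3)<d$.
   Context: Let $\mathcal H_0$ denote the set of functions $h:\mathbb Z_{\ge 0}\to\mathbb Z_{\ge 0}$ with $h(0)>0$. For $h\in\mathcal H_0$ and integers $0\le k\le d$, put $\beta_k^d(h)=\sum_{j=0}^k(-1)^{k-j}\binom{d-j}{k-j}h(j)$. The Hilbert depth of $h$ is $\operatorname{hdepth}(h)=\max\{d\in\mathbb Z_{\ge0}:\ \beta_k^d(h)\ge 0\text{ for all }0\le k\le d\}$; this set contains $d=0$ and is known to be bounded above by $c(h):=\lfloor h(1)/h(0)\rfloor$, so the maximum exists. *)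

theory Defs
  imports Complex_Main
begin

definition in_H0 :: "(nat \<Rightarrow> int) \<Rightarrow> bool" where
  "in_H0 h \<longleftrightarrow> (\<forall>j. h j \<ge> 0) \<and> h 0 > 0"

definition hbeta :: "nat \<Rightarrow> nat \<Rightarrow> (nat \<Rightarrow> int) \<Rightarrow> int" where
  "hbeta k d h = (\<Sum>j=0..k. (-1) ^ (k - j) * int ((d - j) choose (k - j)) * h j)"

definition hdepth :: "(nat \<Rightarrow> int) \<Rightarrow> nat" where
  "hdepth h = (GREATEST d. \<forall>k\<le>d. hbeta k d h \<ge> 0)"

definition cbound :: "(nat \<Rightarrow> int) \<Rightarrow> int" where
  "cbound h = \<lfloor>real_of_int (h 1) / real_of_int (h 0)\<rfloor>"

end

theory Submission imports Defs begin

lemma hb0: "hbeta 0 D h = h 0"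
  by (simp add: hbeta_def)

lemma hb1: "hbeta 1 D h = h 1 - int D * h 0"
  by (simp add: hbeta_def)

lemma hb2: "hbeta 2 D h = h 2 - int (D - 1) * h 1 + int (D choose 2) * h 0"
proof -
  have "{0..2::nat} = {0,1,2}" by auto
  then show ?thesis by (simp add: hbeta_def)
qed

lemma ch2: "int (Suc d choose 2) = int (d choose 2) + int d"
  by (simp add: numeral_2_eq_2)

lemma down:
  assumes "h 0 \<ge> 0"
  shows "\<forall>k\<le>d+n. hbeta k (d+n) h \<ge> 0 \<Longrightarrow> 2 \<le> d \<Longrightarrow> hbeta 1 d h \<ge> 0 \<and> hbeta 2 d h \<ge> 0"
proof (induction n arbitrary: d)
  case 0
  then show ?case by auto
next
  case (Suc n)
  have "hbeta 1 (Suc d) h \<ge> 0 \<and> hbeta 2 (Suc d) h \<ge> 0"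
    using Suc.IH[of "Suc d"] Suc.prems by simp
  then show ?case using assms unfolding hb1 hb2
    by (cases d) (auto simp: ch2 algebra_simps)
qed

lemma depth_bound:
  assumes h0: "h 0 > 0" and P: "\<forall>k\<le>y. hbeta k y h \<ge> 0"
  shows "y \<le> nat (h 1)"
proof (cases "y = 0")
  case False
  then have "hbeta 1 y h \<ge> 0" using P by auto
  moreover have "hbeta 1 y h = h 1 - int y * h 0" by (rule hb1)
  ultimately have "int y * h 0 \<le> h 1" by linarith
  moreover have "int y \<le> int y * h 0" using h0 by (simp add: mult_le_cancel_left1)
  ultimately show ?thesis by linarith
qed simp

lemma hdepth_prop:
  assumes h0: "h 0 > 0"
  shows "\<forall>k\<le>hdepth h. hbeta k (hdepth h) h \<ge> 0"
  unfolding hdepth_def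
proof (rule GreatestI_nat[where k=0 and b="nat (h 1)"])
  show "\<forall>k\<le>0. 0 \<le> hbeta k 0 h" using h0 by (simp add: hb0)
  show "\<And>y. \<forall>k\<le>y. 0 \<le> hbeta k y h \<Longrightarrow> y \<le> nat (h 1)"
    using depth_bound[of h, OF h0] by blast
qed

theorem lemma3p2:
  fixes a b c e :: int and d :: int
  assumes "a \<noteq> 0" and "e > 0"
    and "\<forall>j::nat. a * int j ^ 3 + b * int j ^ 2 + c * int j + e \<ge> 0"
    and "real_of_int a / real_of_int e + real_of_int b / real_of_int e
           + real_of_int c / real_of_int e \<ge> 2"
    and "3 \<le> d"
    and "d \<le> cbound (\<lambda>j. a * int j ^ 3 + b * int j ^ 2 + c * int j + e) + 1"
    and "(let \<alpha> = real_of_int a / real_of_int e; \<beta> = real_of_int b / real_of_int e;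
              \<gamma> = real_of_int c / real_of_int e; x = real_of_int d
          in x ^ 2 / 2 - (\<alpha> + \<beta> + \<gamma> + 3 / 2) * x + (9 * \<alpha> + 5 * \<beta> + 3 * \<gamma> + 2)) < 0"
  shows "int (hdepth (\<lambda>j. a * int j ^ 3 + b * int j ^ 2 + c * int j + e)) < d"
proof (rule ccontr)
  define h where "h = (\<lambda>j::nat. a * int j ^ 3 + b * int j ^ 2 + c * int j + e)"
  assume "\<not> ?thesis"
  then have ge: "nat d \<le> hdepth h" unfolding h_def by linarith
  have h0: "h 0 > 0" using assms(2) by (simp add: h_def)
  obtain n where n: "hdepth h = nat d + n" using ge le_Suc_ex by blast
  have "hbeta 1 (nat d) h \<ge> 0 \<and> hbeta 2 (nat d) h \<ge> 0"
    using down[of h "nat d" n] hdepth_prop[of h, OF h0] h0 n assms(5) by simp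
  then have B: "hbeta 2 (nat d) h \<ge> 0" by simp
  obtain m where m: "nat d = Suc m" using assms(5) by (cases "nat d") auto
  have dm: "d = int m + 1" using m assms(5) by linarith
  have ch: "int (Suc m choose 2) * 2 = (int m + 1) * int m"
  proof -
    have e: "even (Suc m * m)" by simp
    have "Suc m choose 2 = Suc m * m div 2" by (simp only: choose_two diff_Suc_1)
    then have "(Suc m choose 2) * 2 = Suc m * m" using e by simp
    then have "int ((Suc m choose 2) * 2) = int (Suc m * m)" by simp
    then show ?thesis by (simp add: algebra_simps)
  qed
  have B2: "2 * (h 2 - int m * h 1) + (int m + 1) * int m * h 0 \<ge> 0"
  proof -
    have "2 * hbeta 2 (nat d) h = 2 * h 2 - 2 * int m * h 1 + (int (Suc m choose 2) * 2) * h 0"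
      unfolding hb2 m by (simp add: algebra_simps)
    then have "2 * hbeta 2 (nat d) h = 2 * (h 2 - int m * h 1) + (int m + 1) * int m * h 0"
      unfolding ch by (simp add: algebra_simps)
    then show ?thesis using B by linarith
  qed
  have B2r: "2 * (real_of_int (h 2) - real m * real_of_int (h 1)) + (real m + 1) * real m * real_of_int (h 0) \<ge> 0"
    using B2 by (metis (mono_tags) of_int_le_iff of_int_0 of_int_add of_int_mult of_int_diff of_int_of_nat_eq of_int_numeral of_int_1)
  have er: "real_of_int e > 0" using assms(2) by simp
  have "real_of_int d = real m + 1" using dm by simp
  then have X: "(real m + 1)^2 / 2 - (real_of_int a/real_of_int e + real_of_int b/real_of_int e + real_of_int c/real_of_int e + 3/2) * (real m + 1) + (9*(real_of_int a/real_of_int e) + 5*(real_of_int b/real_of_int e) + 3*(real_of_int c/real_of_int e) + 2) < 0"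
    using assms(7) by (simp add: Let_def)
  define T where "T = (real m + 1)^2 * real_of_int e - (2*real_of_int a + 2*real_of_int b + 2*real_of_int c + 3*real_of_int e) * (real m + 1) + (18*real_of_int a + 10*real_of_int b + 6*real_of_int c + 4*real_of_int e)"
  have "((real m + 1)^2 / 2 - (real_of_int a/real_of_int e + real_of_int b/real_of_int e + real_of_int c/real_of_int e + 3/2) * (real m + 1) + (9*(real_of_int a/real_of_int e) + 5*(real_of_int b/real_of_int e) + 3*(real_of_int c/real_of_int e) + 2)) * (2*real_of_int e) = T"
    unfolding T_def using er by (simp add: field_simps)
  moreover have "2*real_of_int e > 0" using er by simp
  ultimately have T0: "T < 0" using X by (metis mult_neg_pos)
  moreover have "2 * (real_of_int (h 2) - real m * real_of_int (h 1)) + (real m + 1) * real m * real_of_int (h 0) = T"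
    unfolding T_def by (simp add: h_def power2_eq_square algebra_simps)
  ultimately show False using B2r by linarith
qed

end
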